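(* For a finite graph $G$ define $R_G(t,q)=\sum_{i\ge0}t^i\cdot q\dim H^i(G)$. Then (a) $R_G(t,q)$ depends only on the graph $G$ (not on the chosen ordering of its edges); and (b) $R_G(-1,q)=P_G(1+q)$, where $P_G$ is the chromatic polynomial of $G$.
   Context: Graphs are finite; loops and multiple edges allowed. $P_G(\lambda)$ is the chromatic polynomial (number of proper vertex colorings with $\lambda$ colors). For a graded $\mathbb{Z}$-module $\mathcal{M}=\bigoplus_jM_j$, $q\dim\mathcal{M}=\sum_jq^j\operatorname{rank}(M_j)$, $\operatorname{rank}(M_j)=\dim_{\mathbb{Q}}(M_j\otimes\mathbb{Q})$. For $G=(V,E)$ and $s\subseteq E$, $[G:s]$ is the spanning subgraph with edge set $s$. With $1*1=1$, $1*x=x*1=x$, $x*x=0$: an enhanced state is $S=(s,c)$, $s\subseteq E$, $c$ assigning $1$ or $x$ to each component of $[G:s]$; $i(S)=|s|$, $j(S)=$ number of components colored $x$. $C^{i,j}(G)$ is free abelian on enhanced states with $i(S)=i,j(S)=j$; $C^i(G)=\bigoplus_jC^{i,j}(G)$, graded by $j$. For an ordering of the edges, $d(S)=\sum_{e\in E\setminus s}(-1)^{n(e)}S_e$, $n(e)$ the number of edges of $s$ ordered before $e$; $S_e=(s\cup\{e\},c_e)$ where, if $e$ joins a component to itself, colors are unchanged, and if $e$ joins distinct components $E_1,E_2$ the merged component gets $c(E_1)*c(E_2)$ (and $S_e=0$ if this is $0$). $H^i(G)=\bigoplus_jH^{i,j}(G)$ is the cohomology of this complex, graded by $j$. *)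

theory Defs
  imports Complex_Main "HOL-Library.Function_Algebras" "HOL-Library.FuncSet"
    "HOL-Computational_Algebra.Polynomial"
begin

text \<open>A finite graph (loops and multiple edges allowed): vertex set V, edge set E
  (edges are abstract objects), and an endpoint map ends.\<close>

definition fin_graph :: "'v set \<Rightarrow> 'e set \<Rightarrow> ('e \<Rightarrow> 'v \<times> 'v) \<Rightarrow> bool" where
  "fin_graph V E ends \<longleftrightarrow> finite V \<and> finite E \<and>
     (\<forall>e\<in>E. fst (ends e) \<in> V \<and> snd (ends e) \<in> V)"

definition adj :: "('e \<Rightarrow> 'v \<times> 'v) \<Rightarrow> 'e set \<Rightarrow> 'v \<Rightarrow> 'v \<Rightarrow> bool" where
  "adj ends s u w \<longleftrightarrow> (\<exists>e\<in>s. ends e = (u, w) \<or> ends e = (w, u))"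

definition conn_rel :: "'v set \<Rightarrow> ('e \<Rightarrow> 'v \<times> 'v) \<Rightarrow> 'e set \<Rightarrow> ('v \<times> 'v) set" where
  "conn_rel V ends s = {(u, w). u \<in> V \<and> w \<in> V \<and> (adj ends s)\<^sup>*\<^sup>* u w}"

definition comps :: "'v set \<Rightarrow> ('e \<Rightarrow> 'v \<times> 'v) \<Rightarrow> 'e set \<Rightarrow> 'v set set" where
  "comps V ends s = V // conn_rel V ends s"

definition comp_of :: "'v set \<Rightarrow> ('e \<Rightarrow> 'v \<times> 'v) \<Rightarrow> 'e set \<Rightarrow> 'v \<Rightarrow> 'v set" where
  "comp_of V ends s u = conn_rel V ends s `` {u}"

text \<open>Enhanced states: a pair (s, X) where s \<subseteq> E and X is the set of components of
  [G:s] coloured x (the remaining components are coloured 1).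
  i(S) = card s, j(S) = card X.\<close>
type_synonym ('v, 'e) state = "'e set \<times> 'v set set"

definition states :: "'v set \<Rightarrow> 'e set \<Rightarrow> ('e \<Rightarrow> 'v \<times> 'v) \<Rightarrow> nat \<Rightarrow> nat \<Rightarrow> ('v, 'e) state set" where
  "states V E ends i j = {(s, X). s \<subseteq> E \<and> card s = i \<and> X \<subseteq> comps V ends s \<and> card X = j}"

definition all_states :: "'v set \<Rightarrow> 'e set \<Rightarrow> ('e \<Rightarrow> 'v \<times> 'v) \<Rightarrow> ('v, 'e) state set" where
  "all_states V E ends = {(s, X). s \<subseteq> E \<and> X \<subseteq> comps V ends s}"

text \<open>The state S_e (None encodes S_e = 0), following the rule 1*1=1, 1*x=x*1=x, x*x=0.\<close>
definition next_state :: "'v set \<Rightarrow> ('e \<Rightarrow> 'v \<times> 'v) \<Rightarrow> ('v, 'e) state \<Rightarrow> 'e \<Rightarrow> ('v, 'e) state option" where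
  "next_state V ends S e =
     (let s = fst S; X = snd S;
          C1 = comp_of V ends s (fst (ends e)); C2 = comp_of V ends s (snd (ends e))
      in if C1 = C2 then Some (insert e s, X)
         else if C1 \<in> X \<and> C2 \<in> X then None
         else Some (insert e s,
                    (X - {C1, C2}) \<union> (if C1 \<in> X \<or> C2 \<in> X then {C1 \<union> C2} else {})))"

definition edge_ordering :: "'e set \<Rightarrow> 'e list \<Rightarrow> bool" where
  "edge_ordering E es \<longleftrightarrow> distinct es \<and> set es = E"

definition n_before :: "'e list \<Rightarrow> 'e set \<Rightarrow> 'e \<Rightarrow> nat" where
  "n_before es s e = card {e' \<in> s. e' \<in> set (takeWhile (\<lambda>x. x \<noteq> e) es)}"

definition dcoef :: "'v set \<Rightarrow> 'e set \<Rightarrow> ('e \<Rightarrow> 'v \<times> 'v) \<Rightarrow> 'e list \<Rightarrow>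
    ('v, 'e) state \<Rightarrow> ('v, 'e) state \<Rightarrow> int" where
  "dcoef V E ends es S T =
     (\<Sum>e\<in>E - fst S. if next_state V ends S e = Some T then (-1) ^ n_before es (fst S) e else 0)"

text \<open>Rational chains: finitely supported functions from enhanced states to rat.
  C^{i,j}(G) \<otimes> Q is the subspace supported on states of bidegree (i,j).\<close>
definition chains :: "'v set \<Rightarrow> 'e set \<Rightarrow> ('e \<Rightarrow> 'v \<times> 'v) \<Rightarrow> nat \<Rightarrow> nat \<Rightarrow>
    (('v, 'e) state \<Rightarrow> rat) set" where
  "chains V E ends i j = {f. \<forall>S. f S \<noteq> 0 \<longrightarrow> S \<in> states V E ends i j}"

definition dmap :: "'v set \<Rightarrow> 'e set \<Rightarrow> ('e \<Rightarrow> 'v \<times> 'v) \<Rightarrow> 'e list \<Rightarrow>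
    (('v, 'e) state \<Rightarrow> rat) \<Rightarrow> (('v, 'e) state \<Rightarrow> rat)" where
  "dmap V E ends es f = (\<lambda>T. \<Sum>S\<in>all_states V E ends. f S * of_int (dcoef V E ends es S T))"

definition qscale :: "rat \<Rightarrow> ('a \<Rightarrow> rat) \<Rightarrow> ('a \<Rightarrow> rat)" where
  "qscale c f = (\<lambda>x. c * f x)"

definition qdim :: "('a \<Rightarrow> rat) set \<Rightarrow> nat" where
  "qdim W = vector_space.dim qscale W"

text \<open>rank H^{i,j}(G) = dim_Q (H^{i,j}(G) \<otimes> Q) = dim (ker d on C^{i,j}\<otimes>Q) - dim (image of
  d from C^{i-1,j}\<otimes>Q)  (Q is flat over Z, so homology commutes with \<otimes> Q).\<close>
definition cycles where
  "cycles V E ends es i j = {f \<in> chains V E ends i j. dmap V E ends es f = 0}"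

definition boundaries where
  "boundaries V E ends es i j =
     (if i = 0 then {0} else dmap V E ends es ` chains V E ends (i - 1) j)"

definition hrank :: "'v set \<Rightarrow> 'e set \<Rightarrow> ('e \<Rightarrow> 'v \<times> 'v) \<Rightarrow> 'e list \<Rightarrow> nat \<Rightarrow> nat \<Rightarrow> nat" where
  "hrank V E ends es i j = qdim (cycles V E ends es i j) - qdim (boundaries V E ends es i j)"

text \<open>R_G(t,q) = \<Sum>_i t^i q dim H^i(G); all groups vanish for i > |E| or j > |V|.\<close>
definition R_G :: "'v set \<Rightarrow> 'e set \<Rightarrow> ('e \<Rightarrow> 'v \<times> 'v) \<Rightarrow> 'e list \<Rightarrow> real \<Rightarrow> real \<Rightarrow> real" where
  "R_G V E ends es t q = (\<Sum>i\<in>{0..card E}. \<Sum>j\<in>{0..card V}. t ^ i * q ^ j * real (hrank V E ends es i j))"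

definition proper_colorings :: "'v set \<Rightarrow> 'e set \<Rightarrow> ('e \<Rightarrow> 'v \<times> 'v) \<Rightarrow> nat \<Rightarrow> ('v \<Rightarrow> nat) set" where
  "proper_colorings V E ends n =
     {c \<in> V \<rightarrow>\<^sub>E {..<n}. \<forall>e\<in>E. c (fst (ends e)) \<noteq> c (snd (ends e))}"

definition chromatic_poly :: "'v set \<Rightarrow> 'e set \<Rightarrow> ('e \<Rightarrow> 'v \<times> 'v) \<Rightarrow> int poly" where
  "chromatic_poly V E ends =
     (THE p. \<forall>n. poly p (int n) = int (card (proper_colorings V E ends n)))"

end

theory Submission
  imports Defs
begin

context vector_space begin

lemma my_rank_nullity:
  assumes W: "subspace W" "W \<subseteq> span A" "finite A" and lf: "Vector_Spaces.linear scale scale f"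
  shows "dim W = dim {x\<in>W. f x = 0} + dim (f ` W)"
proof -
  interpret L: Vector_Spaces.linear scale scale f by fact
  let ?K = "{x\<in>W. f x = 0}"
  obtain BK where BK: "BK \<subseteq> ?K" "independent BK" "?K \<subseteq> span BK" "card BK = dim ?K"
    by (rule basis_exists)
  have "BK \<subseteq> W" using BK by auto
  then obtain B where B: "BK \<subseteq> B" "B \<subseteq> W" "independent B" "W \<subseteq> span B"
    using maximal_independent_subset_extend BK(2) by metis
  have cardB: "card B = dim W" using B basis_card_eq_dim by auto
  have finB: "finite B" using independent_span_bound[OF W(3) B(3)] B W by auto
  define C where "C = B - BK"
  have indC: "independent C" using B(3) independent_mono C_def by auto
  have spC: "span C \<subseteq> W" using span_minimal[of C W] W B C_def by auto
  have z: "x = 0" if x: "x \<in> span C" "f x = 0" for x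
  proof -
    have "x \<in> ?K" using x spC by auto
    then have xK: "x \<in> span BK" using BK by auto
    have r1: "representation B x = representation C x"
      by (rule representation_extend[OF B(3) x(1)]) (auto simp: C_def)
    have r2: "representation B x = representation BK x"
      by (rule representation_extend[OF B(3) xK]) (use B in auto)
    have r0: "representation B x b = 0" for b
      using representation_ne_zero[of C x b] representation_ne_zero[of BK x b] r1 r2
      by (auto simp: C_def)
    have xB: "x \<in> span B" using xK span_mono[OF B(1)] by auto
    show "x = 0"
      using sum_nonzero_representation_eq[OF B(3) xB] r0 by simp
  qed
  have inj: "inj_on f (span C)"
    using L.inj_on_iff_eq_0[OF subspace_span] z by auto
  have indfC: "independent (f ` C)"
    using L.independent_injective_image[OF indC inj] .
  have cardfC: "card (f ` C) = card C"
    using card_image inj_on_subset[OF inj span_superset] by blast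
  have sub1: "f ` C \<subseteq> f ` W" using C_def B by auto
  have "f ` W \<subseteq> span (f ` B)" using L.spans_image[OF B(4)] .
  also have "span (f ` B) \<subseteq> span (f ` C)"
  proof (rule span_minimal)
    show "f ` B \<subseteq> span (f ` C)"
    proof
      fix y assume "y \<in> f ` B"
      then obtain b where b: "b \<in> B" "y = f b" by auto
      show "y \<in> span (f ` C)"
      proof (cases "b \<in> BK")
        case True then have "f b = 0" using BK by auto
        then show ?thesis using b span_zero by auto
      next
        case False then show ?thesis using b span_base C_def by auto
      qed
    qed
  qed auto
  finally have "f ` W \<subseteq> span (f ` C)" .
  then have dimfW: "dim (f ` W) = card C"
    using basis_card_eq_dim[OF sub1 _ indfC] cardfC by auto
  have "card C = card B - card BK" unfolding C_def using finB B(1) card_Diff_subset finite_subset by blast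
  moreover have "card BK \<le> card B" using finB B(1) card_mono by blast
  ultimately show ?thesis using cardB BK(4) dimfW by linarith
qed

lemma my_dim_mono:
  assumes "S \<subseteq> T" "T \<subseteq> span A" "finite A"
  shows "dim S \<le> dim T"
proof -
  obtain B where B: "B \<subseteq> T" "independent B" "T \<subseteq> span B" "card B = dim T"
    by (rule basis_exists)
  have "finite B" using independent_span_bound[OF assms(3) B(2)] B assms by auto
  then show ?thesis using dim_le_card[of S B] B assms by auto
qed

lemma my_dim_inj_image:
  assumes lf: "Vector_Spaces.linear scale scale f" and inj: "inj f"
  shows "dim (f ` W) = dim W"
proof -
  interpret L: Vector_Spaces.linear scale scale f by fact
  obtain B where B: "B \<subseteq> W" "independent B" "W \<subseteq> span B" "card B = dim W"
    by (rule basis_exists)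
  have ind: "independent (f ` B)"
    using L.independent_injective_image[OF B(2)] inj_on_subset[OF inj] by auto
  have "f ` W \<subseteq> span (f ` B)" using L.spans_image[OF B(3)] .
  then have "dim (f ` W) = card (f ` B)"
    using basis_card_eq_dim[OF _ _ ind] B(1) by (metis image_mono)
  also have "\<dots> = card B" using card_image inj_on_subset[OF inj] by blast
  finally show ?thesis using B by simp
qed

end

lemma vs_qscale: "vector_space (qscale :: rat \<Rightarrow> ('a \<Rightarrow> rat) \<Rightarrow> _)"
  unfolding vector_space_def qscale_def by (auto simp: fun_eq_iff algebra_simps)

lemma adj_sym: "adj ends s u w = adj ends s w u"
  unfolding adj_def by auto

lemma P_sym: "(adj ends s)\<^sup>*\<^sup>* x y \<Longrightarrow> (adj ends s)\<^sup>*\<^sup>* y x"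
proof (induction rule: rtranclp.induct)
  case (rtrancl_refl a) then show ?case by simp
next
  case (rtrancl_into_rtrancl a b c)
  then show ?case using adj_sym by (metis converse_rtranclp_into_rtranclp)
qed

lemma P_mono: "s \<subseteq> t \<Longrightarrow> (adj ends s)\<^sup>*\<^sup>* x y \<Longrightarrow> (adj ends t)\<^sup>*\<^sup>* x y"
proof -
  assume st: "s \<subseteq> t"
  have "adj ends s \<le> adj ends t" using st unfolding adj_def by auto
  then show "(adj ends s)\<^sup>*\<^sup>* x y \<Longrightarrow> (adj ends t)\<^sup>*\<^sup>* x y" using rtranclp_mono by blast
qed

lemma P_insert:
  assumes "ends e = (u, w)"
  shows "(adj ends (insert e s))\<^sup>*\<^sup>* x y \<longleftrightarrow>
    (adj ends s)\<^sup>*\<^sup>* x y \<or> ((adj ends s)\<^sup>*\<^sup>* x u \<and> (adj ends s)\<^sup>*\<^sup>* w y) \<or>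
    ((adj ends s)\<^sup>*\<^sup>* x w \<and> (adj ends s)\<^sup>*\<^sup>* u y)"
  (is "?L \<longleftrightarrow> ?R")
proof
  let ?P = "(adj ends s)\<^sup>*\<^sup>*"
  assume ?L then show ?R
  proof (induction rule: rtranclp.induct)
    case (rtrancl_refl a) then show ?case by simp
  next
    case (rtrancl_into_rtrancl a b c)
    from rtrancl_into_rtrancl.hyps(2) obtain e' where e': "e' \<in> insert e s" "ends e' = (b, c) \<or> ends e' = (c, b)"
      unfolding adj_def by auto
    show ?case
    proof (cases "e' = e")
      case True
      then have bc: "(b = u \<and> c = w) \<or> (b = w \<and> c = u)" using e' assms by auto
      have Pbb: "?P b b" "?P c c" by auto
      have tr: "\<And>x y z. ?P x y \<Longrightarrow> ?P y z \<Longrightarrow> ?P x z" by auto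
      from rtrancl_into_rtrancl.IH bc show ?thesis
        by (metis P_sym tr rtranclp.rtrancl_refl)
    next
      case False
      then have "adj ends s b c" using e' unfolding adj_def by auto
      then have "?P b c" by auto
      with rtrancl_into_rtrancl.IH show ?thesis by (meson rtranclp_trans)
    qed
  qed
next
  let ?P' = "(adj ends (insert e s))\<^sup>*\<^sup>*"
  have m: "\<And>x y. (adj ends s)\<^sup>*\<^sup>* x y \<Longrightarrow> ?P' x y" using P_mono[of s "insert e s" ends] by auto
  have uw: "?P' u w" "?P' w u" using assms unfolding adj_def by (auto intro!: r_into_rtranclp)
  assume ?R then show ?L using m uw by (meson rtranclp_trans)
qed

locale G =
  fixes V :: "'v set" and E :: "'e set" and ends :: "'e \<Rightarrow> 'v \<times> 'v"
  assumes fg: "fin_graph V E ends"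
begin

lemma finV: "finite V" and finE: "finite E" and endsV: "e \<in> E \<Longrightarrow> fst (ends e) \<in> V \<and> snd (ends e) \<in> V"
  using fg unfolding fin_graph_def by auto

abbreviation R where "R s \<equiv> conn_rel V ends s"
abbreviation cmp where "cmp s \<equiv> comps V ends s"
abbreviation cof where "cof s \<equiv> comp_of V ends s"

lemma equivR: "equiv V (R s)"
  unfolding equiv_def refl_on_def sym_def trans_def conn_rel_def
  by (auto intro: P_sym rtranclp_trans)

lemma cof_eq: "cof s v = {w. w \<in> V \<and> (adj ends s)\<^sup>*\<^sup>* v w \<and> v \<in> V}"
  unfolding comp_of_def conn_rel_def by auto

lemma cof_in: "v \<in> V \<Longrightarrow> cof s v \<in> cmp s"
  unfolding comps_def comp_of_def by (rule quotientI)

lemma in_cof: "v \<in> V \<Longrightarrow> v \<in> cof s v"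
  unfolding cof_eq by auto

lemma cmp_cof: "C \<in> cmp s \<Longrightarrow> v \<in> C \<Longrightarrow> cof s v = C"
  unfolding comps_def comp_of_def
  by (metis equivR equiv_class_eq_iff quotientE Image_singleton_iff)

lemma cmp_sub: "C \<in> cmp s \<Longrightarrow> C \<subseteq> V"
  unfolding comps_def using equivR by (metis in_quotient_imp_subset)

lemma cmp_ne: "C \<in> cmp s \<Longrightarrow> C \<noteq> {}"
  unfolding comps_def using equivR by (metis in_quotient_imp_non_empty)

lemma cmp_disj: "C \<in> cmp s \<Longrightarrow> D \<in> cmp s \<Longrightarrow> x \<in> C \<Longrightarrow> x \<in> D \<Longrightarrow> C = D"
  using cmp_cof by metis

lemma fin_cmp: "finite (cmp s)"
  unfolding comps_def using finV equivR by (metis finite_quotient equiv_type)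


lemma P_cof: "v \<in> V \<Longrightarrow> x \<in> cof s v \<longleftrightarrow> x \<in> V \<and> (adj ends s)\<^sup>*\<^sup>* v x"
  unfolding cof_eq by auto

lemma cof_insert:
  assumes e: "e \<in> E" and x: "x \<in> V"
  shows "cof (insert e s) x = (if x \<in> cof s (fst (ends e)) \<union> cof s (snd (ends e))
      then cof s (fst (ends e)) \<union> cof s (snd (ends e)) else cof s x)"
proof -
  obtain u w where uw: "ends e = (u, w)" by fastforce
  have uV: "u \<in> V" and wV: "w \<in> V" using endsV[OF e] uw by auto
  let ?P = "(adj ends s)\<^sup>*\<^sup>*"
  have tr: "\<And>a b c. ?P a b \<Longrightarrow> ?P b c \<Longrightarrow> ?P a c" by auto
  have sy: "\<And>a b. ?P a b \<Longrightarrow> ?P b a" by (rule P_sym)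
  have L: "y \<in> cof (insert e s) x \<longleftrightarrow> y \<in> V \<and> (?P x y \<or> (?P x u \<and> ?P w y) \<or> (?P x w \<and> ?P u y))" for y
    using P_cof[OF x, of y "insert e s"] P_insert[where ends=ends and e=e and u=u and w=w and s=s and x=x and y=y, OF uw] by auto
  show ?thesis
  proof (cases "x \<in> cof s u \<union> cof s w")
    case True
    then have "?P u x \<or> ?P w x" using P_cof uV wV by auto
    then have "y \<in> V \<and> (?P x y \<or> (?P x u \<and> ?P w y) \<or> (?P x w \<and> ?P u y)) \<longleftrightarrow> y \<in> V \<and> (?P u y \<or> ?P w y)" for y
    proof
      assume ux: "?P u x"
      then have xu: "?P x u" by (rule sy)
      show ?thesis using tr[OF ux] tr[OF xu] by blast
    next
      assume wx: "?P w x"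
      then have xw: "?P x w" by (rule sy)
      show ?thesis using tr[OF wx] tr[OF xw] by blast
    qed
    then have "y \<in> cof (insert e s) x \<longleftrightarrow> y \<in> cof s u \<union> cof s w" for y
      unfolding L using P_cof[OF uV] P_cof[OF wV] by auto
    then show ?thesis using True uw by auto
  next
    case False
    then have "\<not> ?P u x" "\<not> ?P w x" using P_cof uV wV x by auto
    then have nxu: "\<not> ?P x u" "\<not> ?P x w" using sy by blast+
    then have "y \<in> cof (insert e s) x \<longleftrightarrow> y \<in> cof s x" for y
      unfolding L using P_cof[OF x] by auto
    then show ?thesis using False uw by auto
  qed
qed

definition up :: "'e set \<Rightarrow> 'v set \<Rightarrow> 'v set" where
  "up t C = cof t (SOME v. v \<in> C)"

lemma up_props:
  assumes st: "s \<subseteq> t" and C: "C \<in> cmp s"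
  shows "up t C \<in> cmp t" "C \<subseteq> up t C" "\<And>D. D \<in> cmp t \<Longrightarrow> C \<subseteq> D \<Longrightarrow> D = up t C"
proof -
  define v where "v = (SOME v. v \<in> C)"
  have vC: "v \<in> C" unfolding v_def using cmp_ne[OF C] by (simp add: some_in_eq)
  have vV: "v \<in> V" using vC cmp_sub[OF C] by auto
  show "up t C \<in> cmp t" unfolding up_def v_def[symmetric] using cof_in[OF vV] .
  show sub: "C \<subseteq> up t C"
  proof
    fix x assume xC: "x \<in> C"
    have "x \<in> cof s v" using cmp_cof[OF C vC] xC by simp
    then have "x \<in> V \<and> (adj ends s)\<^sup>*\<^sup>* v x" using P_cof[OF vV, of x s] by blast
    then have "x \<in> V \<and> (adj ends t)\<^sup>*\<^sup>* v x" using P_mono[OF st, of ends v x] by blast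
    then show "x \<in> up t C" unfolding up_def v_def[symmetric] using P_cof[OF vV, of x t] by blast
  qed
  fix D assume D: "D \<in> cmp t" "C \<subseteq> D"
  then have "v \<in> D" using vC by auto
  then show "D = up t C" unfolding up_def v_def[symmetric] using cmp_cof[OF D(1)] by simp
qed

lemma up_comp:
  assumes "s \<subseteq> t" "t \<subseteq> u" "C \<in> cmp s"
  shows "up u (up t C) = up u C"
proof -
  have a: "up t C \<in> cmp t" "C \<subseteq> up t C" using up_props(1,2)[OF assms(1,3)] by auto
  have b: "up u (up t C) \<in> cmp u" "up t C \<subseteq> up u (up t C)" using up_props(1,2)[OF assms(2) a(1)] by auto
  have "s \<subseteq> u" using assms by auto
  moreover have "C \<subseteq> up u (up t C)" using a b by auto
  ultimately show ?thesis using up_props(3)[OF _ assms(3) b(1)] by simp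
qed

definition push :: "'v set set \<Rightarrow> 'e set \<Rightarrow> ('v, 'e) state option" where
  "push X t = (if inj_on (up t) X then Some (t, up t ` X) else None)"

lemma push_comp_Some:
  assumes "s \<subseteq> t" "t \<subseteq> u" "X \<subseteq> cmp s" "push X t = Some T"
  shows "push (snd T) u = push X u"
proof -
  have inj: "inj_on (up t) X" and T: "T = (t, up t ` X)" using assms(4) unfolding push_def by (auto split: if_splits)
  have eq: "\<And>C. C \<in> X \<Longrightarrow> up u (up t C) = up u C" by (rule up_comp[OF assms(1,2)]) (use assms(3) in auto)
  have "inj_on (up u) (up t ` X) \<longleftrightarrow> inj_on (up u \<circ> up t) X" by (rule comp_inj_on_iff[OF inj])
  also have "\<dots> \<longleftrightarrow> inj_on (up u) X" by (rule inj_on_cong) (simp add: eq)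
  finally have i: "inj_on (up u) (up t ` X) \<longleftrightarrow> inj_on (up u) X" .
  have "up u ` up t ` X = (\<lambda>C. up u (up t C)) ` X" by (simp add: image_image)
  also have "\<dots> = up u ` X" by (rule image_cong) (simp_all add: eq)
  finally have im: "up u ` up t ` X = up u ` X" .
  show ?thesis unfolding push_def T snd_conv i im ..
qed

lemma push_comp_None:
  assumes "s \<subseteq> t" "t \<subseteq> u" "X \<subseteq> cmp s" "push X t = None"
  shows "push X u = None"
proof -
  have ninj: "\<not> inj_on (up t) X" using assms(4) unfolding push_def by (auto split: if_splits)
  have eq: "\<And>C. C \<in> X \<Longrightarrow> up u (up t C) = up u C" by (rule up_comp[OF assms(1,2)]) (use assms(3) in auto)
  have "\<not> inj_on (up u) X"
  proof
    assume "inj_on (up u) X"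
    then have "inj_on (up u \<circ> up t) X" using eq unfolding inj_on_def by simp
    then show False using ninj inj_on_imageI2 by blast
  qed
  then show ?thesis unfolding push_def by auto
qed

lemma push_Some:
  assumes "s \<subseteq> t" "X \<subseteq> cmp s" "push X t = Some T"
  shows "fst T = t" "snd T \<subseteq> cmp t" "card (snd T) = card X"
proof -
  have inj: "inj_on (up t) X" and T: "T = (t, up t ` X)" using assms(3) unfolding push_def by (auto split: if_splits)
  show "fst T = t" using T by simp
  show "snd T \<subseteq> cmp t" using T up_props(1)[OF assms(1)] assms(2) by auto
  show "card (snd T) = card X" using T inj by (simp add: card_image)
qed

end

context G begin

lemma cmp_eq_of_sub: "C \<in> cmp s \<Longrightarrow> D \<in> cmp s \<Longrightarrow> C \<subseteq> D \<Longrightarrow> C = D"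
  using cmp_ne cmp_disj by blast

lemma up_insert:
  assumes e: "e \<in> E" and C: "C \<in> cmp s"
  shows "up (insert e s) C = (if C = cof s (fst (ends e)) \<or> C = cof s (snd (ends e))
     then cof s (fst (ends e)) \<union> cof s (snd (ends e)) else C)"
proof -
  define v where "v = (SOME v. v \<in> C)"
  have vC: "v \<in> C" unfolding v_def using cmp_ne[OF C] by (simp add: some_in_eq)
  have vV: "v \<in> V" using vC cmp_sub[OF C] by auto
  define C1 where "C1 = cof s (fst (ends e))"
  define C2 where "C2 = cof s (snd (ends e))"
  have C12: "C1 \<in> cmp s" "C2 \<in> cmp s" unfolding C1_def C2_def using cof_in endsV[OF e] by auto
  have a: "v \<in> C1 \<longleftrightarrow> C = C1" using cmp_disj[OF C C12(1) vC] vC by auto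
  have b: "v \<in> C2 \<longleftrightarrow> C = C2" using cmp_disj[OF C C12(2) vC] vC by auto
  have c: "cof s v = C" using cmp_cof[OF C vC] .
  show ?thesis unfolding up_def v_def[symmetric] cof_insert[OF e vV]
    using a b c unfolding C1_def C2_def by auto
qed

lemma NS:
  assumes e: "e \<in> E" and X: "X \<subseteq> cmp s"
  shows "next_state V ends (s, X) e = push X (insert e s)"
proof -
  define C1 where "C1 = cof s (fst (ends e))"
  define C2 where "C2 = cof s (snd (ends e))"
  define t where "t = insert e s"
  have C12: "C1 \<in> cmp s" "C2 \<in> cmp s" unfolding C1_def C2_def using cof_in endsV[OF e] by auto
  have upf: "\<And>C. C \<in> cmp s \<Longrightarrow> up t C = (if C = C1 \<or> C = C2 then C1 \<union> C2 else C)"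
    unfolding t_def C1_def C2_def by (rule up_insert[OF e])
  have ns: "next_state V ends (s, X) e = (if C1 = C2 then Some (t, X)
         else if C1 \<in> X \<and> C2 \<in> X then None
         else Some (t, (X - {C1, C2}) \<union> (if C1 \<in> X \<or> C2 \<in> X then {C1 \<union> C2} else {})))"
    unfolding next_state_def Let_def C1_def C2_def t_def by simp
  show ?thesis
  proof (cases "C1 = C2")
    case True
    have u: "\<And>C. C \<in> X \<Longrightarrow> up t C = C"
    proof -
      fix C assume "C \<in> X"
      then have "C \<in> cmp s" using X by auto
      then show "up t C = C" using upf True by simp
    qed
    have "inj_on (up t) X" using u by (auto simp: inj_on_def)
    moreover have "up t ` X = X" using u by simp
    ultimately show ?thesis unfolding ns push_def t_def[symmetric] using True by simp
  next
    case False
    have ne: "C1 \<noteq> {}" "C2 \<noteq> {}" using C12 cmp_ne by auto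
    have oth: "\<And>C. C \<in> cmp s \<Longrightarrow> C \<noteq> C1 \<Longrightarrow> C \<noteq> C2 \<Longrightarrow> C \<noteq> C1 \<union> C2"
      using cmp_eq_of_sub[OF C12(1)] by blast
    show ?thesis
    proof (cases "C1 \<in> X \<and> C2 \<in> X")
      case True
      have "up t C1 = up t C2" using upf C12 by simp
      then have "\<not> inj_on (up t) X" using True False unfolding inj_on_def by blast
      then show ?thesis unfolding ns push_def t_def[symmetric] using True False by simp
    next
      case nb: False
      have "inj_on (up t) X"
      proof (rule inj_onI)
        fix C C' assume CC: "C \<in> X" "C' \<in> X" "up t C = up t C'"
        have cs: "C \<in> cmp s" "C' \<in> cmp s" using CC X by auto
        show "C = C'"
        proof (cases "C = C1 \<or> C = C2")
          case True
          show ?thesis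
          proof (cases "C' = C1 \<or> C' = C2")
            case True2: True
            then show ?thesis using True nb CC(1,2) by auto
          next
            case False2: False
            then have "C1 \<union> C2 = C'" using CC(3) upf[OF cs(1)] upf[OF cs(2)] True by simp
            then show ?thesis using oth[OF cs(2)] False2 by auto
          qed
        next
          case False1: False
          show ?thesis
          proof (cases "C' = C1 \<or> C' = C2")
            case True2: True
            then have "C1 \<union> C2 = C" using CC(3) upf[OF cs(1)] upf[OF cs(2)] False1 by simp
            then show ?thesis using oth[OF cs(1)] False1 by auto
          next
            case False2: False
            then show ?thesis using CC(3) upf[OF cs(1)] upf[OF cs(2)] False1 by simp
          qed
        qed
      qed
      moreover have "up t ` X = (X - {C1, C2}) \<union> (if C1 \<in> X \<or> C2 \<in> X then {C1 \<union> C2} else {})"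
      proof
        show "up t ` X \<subseteq> (X - {C1, C2}) \<union> (if C1 \<in> X \<or> C2 \<in> X then {C1 \<union> C2} else {})"
        proof
          fix D assume "D \<in> up t ` X"
          then obtain C where C: "C \<in> X" "D = up t C" by auto
          then have cs: "C \<in> cmp s" using X by auto
          show "D \<in> (X - {C1, C2}) \<union> (if C1 \<in> X \<or> C2 \<in> X then {C1 \<union> C2} else {})"
            using C upf[OF cs] by auto
        qed
        show "(X - {C1, C2}) \<union> (if C1 \<in> X \<or> C2 \<in> X then {C1 \<union> C2} else {}) \<subseteq> up t ` X"
        proof
          fix D assume D: "D \<in> (X - {C1, C2}) \<union> (if C1 \<in> X \<or> C2 \<in> X then {C1 \<union> C2} else {})"
          show "D \<in> up t ` X"
          proof (cases "D \<in> X - {C1, C2}")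
            case True
            then have "D \<in> cmp s" "D \<noteq> C1" "D \<noteq> C2" using X by auto
            then have "up t D = D" using upf by simp
            then show ?thesis using True by (metis DiffD1 image_eqI)
          next
            case False
            then have D12: "D = C1 \<union> C2" "C1 \<in> X \<or> C2 \<in> X" using D by (auto split: if_splits)
            then show ?thesis using upf[OF C12(1)] upf[OF C12(2)] by (metis image_eqI)
          qed
        qed
      qed
      ultimately show ?thesis unfolding ns push_def t_def[symmetric] using nb False by simp
    qed
  qed
qed

end

lemma tw_swap:
  "distinct es \<Longrightarrow> x \<in> set es \<Longrightarrow> y \<in> set es \<Longrightarrow> x \<noteq> y \<Longrightarrow>
   x \<in> set (takeWhile (\<lambda>z. z \<noteq> y) es) \<longleftrightarrow> y \<notin> set (takeWhile (\<lambda>z. z \<noteq> x) es)"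
proof (induction es)
  case Nil then show ?case by simp
next
  case (Cons a l)
  show ?case
  proof (cases "a = x")
    case True then show ?thesis using Cons.prems by simp
  next
    case False
    show ?thesis
    proof (cases "a = y")
      case True then show ?thesis using Cons.prems by simp
    next
      case False2: False
      then have "x \<in> set l" "y \<in> set l" "distinct l" using Cons.prems False by auto
      then show ?thesis using Cons.IH Cons.prems False False2 by simp
    qed
  qed
qed

lemma nb_insert:
  assumes "finite s" "e \<notin> s"
  shows "n_before es (insert e s) f = n_before es s f + (if e \<in> set (takeWhile (\<lambda>x. x \<noteq> f) es) then 1 else 0)"
proof -
  let ?T = "set (takeWhile (\<lambda>x. x \<noteq> f) es)"
  have fin: "finite {e' \<in> s. e' \<in> ?T}" using assms by auto
  show ?thesis
  proof (cases "e \<in> ?T")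
    case True
    then have "{e' \<in> insert e s. e' \<in> ?T} = insert e {e' \<in> s. e' \<in> ?T}" by auto
    then show ?thesis unfolding n_before_def using True fin assms(2) by simp
  next
    case False
    then have "{e' \<in> insert e s. e' \<in> ?T} = {e' \<in> s. e' \<in> ?T}" by auto
    then show ?thesis unfolding n_before_def using False by simp
  qed
qed

lemma sgn_swap:
  assumes "distinct es" "e \<in> set es" "f \<in> set es" "e \<noteq> f" "finite s" "e \<notin> s" "f \<notin> s"
  shows "(-1::int) ^ (n_before es s e + n_before es (insert e s) f) =
         - ((-1) ^ (n_before es s f + n_before es (insert f s) e))"
proof -
  have sw: "e \<in> set (takeWhile (\<lambda>z. z \<noteq> f) es) \<longleftrightarrow> f \<notin> set (takeWhile (\<lambda>z. z \<noteq> e) es)"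
    using tw_swap[OF assms(1,2,3,4)] .
  show ?thesis
  proof (cases "e \<in> set (takeWhile (\<lambda>z. z \<noteq> f) es)")
    case True
    then have "f \<notin> set (takeWhile (\<lambda>z. z \<noteq> e) es)" using sw by blast
    then show ?thesis unfolding nb_insert[OF assms(5,6)] nb_insert[OF assms(5,7)] using True
      by (simp add: algebra_simps)
  next
    case False
    then have "f \<in> set (takeWhile (\<lambda>z. z \<noteq> e) es)" using sw by blast
    then show ?thesis unfolding nb_insert[OF assms(5,6)] nb_insert[OF assms(5,7)] using False
      by (simp add: algebra_simps)
  qed
qed

lemma antisym_sum_zero:
  fixes g :: "'a \<Rightarrow> 'a \<Rightarrow> int"
  assumes fin: "finite A" and anti: "\<And>e f. e \<in> A \<Longrightarrow> f \<in> A \<Longrightarrow> e \<noteq> f \<Longrightarrow> g f e = - g e f"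
  shows "(\<Sum>e\<in>A. \<Sum>f\<in>A - {e}. g e f) = 0"
proof -
  define P where "P = Sigma A (\<lambda>e. A - {e})"
  have finP: "finite P" unfolding P_def using fin by auto
  have s1: "(\<Sum>e\<in>A. \<Sum>f\<in>A - {e}. g e f) = (\<Sum>p\<in>P. g (fst p) (snd p))"
    unfolding P_def using sum.Sigma[of A "\<lambda>e. A - {e}" "\<lambda>e f. g e f"] fin by (simp add: split_beta)
  have sw: "prod.swap ` P = P" unfolding P_def by force
  have "(\<Sum>p\<in>P. g (fst p) (snd p)) = (\<Sum>p\<in>prod.swap ` P. g (fst p) (snd p))" using sw by simp
  also have "\<dots> = (\<Sum>p\<in>P. g (snd p) (fst p))"
    by (subst sum.reindex) (auto simp: inj_on_def)
  also have "\<dots> = (\<Sum>p\<in>P. - g (fst p) (snd p))"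
    by (rule sum.cong) (auto simp: P_def intro: anti)
  also have "\<dots> = - (\<Sum>p\<in>P. g (fst p) (snd p))" by (simp add: sum_negf)
  finally show ?thesis using s1 by simp
qed

context G begin

abbreviation AS where "AS \<equiv> all_states V E ends"

lemma fin_AS: "finite AS"
proof -
  have "AS \<subseteq> Pow E \<times> Pow (Pow V)"
  proof
    fix S assume "S \<in> AS"
    then obtain s X where S: "S = (s, X)" "s \<subseteq> E" "X \<subseteq> cmp s" unfolding all_states_def by auto
    have "X \<subseteq> Pow V" using S(3) cmp_sub by blast
    then show "S \<in> Pow E \<times> Pow (Pow V)" using S by auto
  qed
  then show ?thesis by (rule finite_subset) (use finE finV in auto)
qed

lemma ns_AS:
  assumes S: "S \<in> AS" and e: "e \<in> E" and T: "next_state V ends S e = Some T"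
  shows "T \<in> AS" "fst T = insert e (fst S)" "card (snd T) = card (snd S)"
proof -
  obtain s X where SX: "S = (s, X)" by fastforce
  have sX: "s \<subseteq> E" "X \<subseteq> cmp s" using S SX unfolding all_states_def by auto
  have p: "push X (insert e s) = Some T" using T NS[OF e sX(2)] SX by simp
  have st: "s \<subseteq> insert e s" by auto
  note ps = push_Some[OF st sX(2) p]
  show "fst T = insert e (fst S)" using ps SX by simp
  show "card (snd T) = card (snd S)" using ps SX by simp
  obtain t Y where tY: "T = (t, Y)" by fastforce
  have "t = insert e s" "Y \<subseteq> cmp t" using ps tY by auto
  then show "T \<in> AS" using tY sX e unfolding all_states_def by auto
qed

lemma ns_states:
  assumes S: "S \<in> states V E ends i j" and e: "e \<in> E - fst S" and T: "next_state V ends S e = Some T"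
  shows "T \<in> states V E ends (Suc i) j"
proof -
  have SA: "S \<in> AS" using S unfolding states_def all_states_def by auto
  note n = ns_AS[OF SA _ T]
  have "fst S \<subseteq> E" using S unfolding states_def by auto
  then have "finite (fst S)" using finE by (rule finite_subset)
  then have "card (fst T) = Suc i" using n e S unfolding states_def by auto
  then show ?thesis using n(1,3) e S unfolding states_def all_states_def by auto
qed

lemma h_push:
  assumes S: "S = (s, X)" "S \<in> AS" and e: "e \<in> E" and f: "f \<in> E"
  shows "(case next_state V ends S e of None \<Rightarrow> None | Some T \<Rightarrow> next_state V ends T f)
         = push X (insert f (insert e s))"
proof -
  have sX: "s \<subseteq> E" "X \<subseteq> cmp s" using S unfolding all_states_def by auto
  have p: "next_state V ends S e = push X (insert e s)" using NS[OF e sX(2)] S by simp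
  show ?thesis
  proof (cases "push X (insert e s)")
    case None
    have "push X (insert f (insert e s)) = None" by (rule push_comp_None[OF _ _ sX(2) None]) auto
    then show ?thesis using p None by simp
  next
    case (Some T)
    note ps = push_Some[OF subset_insertI sX(2) Some]
    obtain t Y where tY: "T = (t, Y)" by fastforce
    have tY2: "t = insert e s" "Y \<subseteq> cmp (insert e s)" using ps tY by auto
    have "next_state V ends T f = push Y (insert f (insert e s))"
      using NS[OF f tY2(2)] tY tY2(1) by simp
    also have "\<dots> = push X (insert f (insert e s))"
      using push_comp_Some[OF _ _ sX(2) Some, of "insert f (insert e s)"] tY by auto
    finally show ?thesis using p Some by simp
  qed
qed

end

locale GO = G V E ends for V :: "'v set" and E :: "'e set" and ends :: "'e \<Rightarrow> 'v \<times> 'v" +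
  fixes es :: "'e list"
  assumes eo: "edge_ordering E es"
begin

lemma dist_es: "distinct es" and set_es: "set es = E"
  using eo unfolding edge_ordering_def by auto

abbreviation sg where "sg s e \<equiv> (-1::int) ^ n_before es s e"
abbreviation dc where "dc \<equiv> dcoef V E ends es"

lemma dd_coef:
  assumes SA: "S \<in> AS"
  shows "(\<Sum>T\<in>AS. dc S T * dc T U) = 0"
proof -
  obtain s X where SX: "S = (s, X)" by fastforce
  have fS: "fst S = s" using SX by simp
  have sE: "s \<subseteq> E" using SA SX unfolding all_states_def by auto
  have fins: "finite s" using sE finE finite_subset by auto
  define g where "g e f = (if push X (insert f (insert e s)) = Some U
       then sg s e * sg (insert e s) f else 0)" for e f
  have step0: "dc S T * dc T U = (\<Sum>e\<in>E - s. if next_state V ends S e = Some T then sg s e * dc T U else 0)" for T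
    unfolding dcoef_def[of V E ends es S] fS sum_distrib_right by (rule sum.cong[OF refl]) simp
  have step1: "(\<Sum>T\<in>AS. dc S T * dc T U) =
     (\<Sum>e\<in>E - s. case next_state V ends S e of None \<Rightarrow> 0 | Some T \<Rightarrow> sg s e * dc T U)"
  proof -
    have "(\<Sum>T\<in>AS. dc S T * dc T U) =
        (\<Sum>T\<in>AS. \<Sum>e\<in>E - s. if next_state V ends S e = Some T then sg s e * dc T U else 0)"
      by (rule sum.cong[OF refl]) (rule step0)
    also have "\<dots> = (\<Sum>e\<in>E - s. \<Sum>T\<in>AS. if next_state V ends S e = Some T then sg s e * dc T U else 0)"
      by (rule sum.swap)
    also have "\<dots> = (\<Sum>e\<in>E - s. case next_state V ends S e of None \<Rightarrow> 0 | Some T \<Rightarrow> sg s e * dc T U)"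
    proof (rule sum.cong[OF refl])
      fix e assume e: "e \<in> E - s"
      show "(\<Sum>T\<in>AS. if next_state V ends S e = Some T then sg s e * dc T U else 0) =
          (case next_state V ends S e of None \<Rightarrow> 0 | Some T \<Rightarrow> sg s e * dc T U)"
      proof (cases "next_state V ends S e")
        case None then show ?thesis by simp
      next
        case (Some T')
        have eE: "e \<in> E" using e by auto
        have "T' \<in> AS" using ns_AS(1)[OF SA eE Some] .
        then show ?thesis using Some fin_AS by (simp add: sum.delta)
      qed
    qed
    finally show ?thesis .
  qed
  have step2: "(case next_state V ends S e of None \<Rightarrow> 0 | Some T \<Rightarrow> sg s e * dc T U)
      = (\<Sum>f\<in>(E - s) - {e}. g e f)" if e: "e \<in> E - s" for e
  proof -
    have eE: "e \<in> E" using e by auto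
    show ?thesis
    proof (cases "next_state V ends S e")
      case None
      have "g e f = 0" if f: "f \<in> E" for f
      proof -
        have "push X (insert f (insert e s)) = None" using h_push[OF SX SA eE f] None by simp
        then show ?thesis unfolding g_def by simp
      qed
      then show ?thesis using None by simp
    next
      case (Some T)
      have fT: "fst T = insert e s" using ns_AS(2)[OF SA eE Some] fS by simp
      have "sg s e * dc T U = (\<Sum>f\<in>E - insert e s. if next_state V ends T f = Some U then sg s e * sg (insert e s) f else 0)"
        unfolding dcoef_def[of V E ends es T] fT sum_distrib_left by (rule sum.cong[OF refl]) simp
      also have "\<dots> = (\<Sum>f\<in>(E - s) - {e}. g e f)"
      proof (rule sum.cong)
        show "E - insert e s = E - s - {e}" by auto
        fix f assume f: "f \<in> E - s - {e}"
        have fE: "f \<in> E" using f by auto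
        have "next_state V ends T f = push X (insert f (insert e s))"
          using h_push[OF SX SA eE fE] Some by simp
        then show "(if next_state V ends T f = Some U then sg s e * sg (insert e s) f else 0) = g e f"
          unfolding g_def by simp
      qed
      finally show ?thesis using Some by simp
    qed
  qed
  have anti: "g f e = - g e f" if ef: "e \<in> E - s" "f \<in> E - s" "e \<noteq> f" for e f
  proof -
    have ee: "e \<in> set es" "f \<in> set es" "e \<notin> s" "f \<notin> s" using ef set_es by auto
    have "(-1::int) ^ (n_before es s e + n_before es (insert e s) f) =
         - ((-1) ^ (n_before es s f + n_before es (insert f s) e))"
      by (rule sgn_swap[OF dist_es ee(1,2) ef(3) fins ee(3,4)])
    then have sw: "sg s e * sg (insert e s) f = - (sg s f * sg (insert f s) e)"
      by (simp only: power_add)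
    have ins: "insert e (insert f s) = insert f (insert e s)" by auto
    show ?thesis unfolding g_def using sw ins by simp
  qed
  have "(\<Sum>T\<in>AS. dc S T * dc T U) = (\<Sum>e\<in>E - s. \<Sum>f\<in>(E - s) - {e}. g e f)"
    unfolding step1 by (rule sum.cong[OF refl]) (rule step2)
  also have "\<dots> = 0" by (rule antisym_sum_zero[OF _ anti]) (use finE in auto)
  finally show ?thesis .
qed

end

definition delta :: "'a \<Rightarrow> 'a \<Rightarrow> rat" where "delta S = (\<lambda>T. if T = S then 1 else 0)"

lemma sum_fun_app: "(\<Sum>x\<in>A. (f x :: 'a \<Rightarrow> 'b::comm_monoid_add)) y = (\<Sum>x\<in>A. f x y)"
  by (induction A rule: infinite_finite_induct) auto

lemma delta_inj: "inj delta"
  by (rule injI) (metis delta_def zero_neq_one)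

lemma dmap_linear: "Vector_Spaces.linear qscale qscale (dmap V E ends es)"
  unfolding Vector_Spaces.linear_iff
proof (intro conjI allI)
  show "vector_space (qscale :: rat \<Rightarrow> (_ \<Rightarrow> rat) \<Rightarrow> _)" by (rule vs_qscale)
  show "vector_space (qscale :: rat \<Rightarrow> (_ \<Rightarrow> rat) \<Rightarrow> _)" by (rule vs_qscale)
  fix x y :: "_ \<Rightarrow> rat"
  show "dmap V E ends es (x + y) = dmap V E ends es x + dmap V E ends es y"
    unfolding dmap_def by (rule ext) (simp add: algebra_simps sum.distrib)
  fix c
  show "dmap V E ends es (qscale c x) = qscale c (dmap V E ends es x)"
    unfolding dmap_def qscale_def by (rule ext) (simp add: algebra_simps sum_distrib_left)
qed

context GO begin

lemma dd_zero: "dmap V E ends es (dmap V E ends es f) = 0"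
proof (rule ext)
  fix U
  have "dmap V E ends es (dmap V E ends es f) U =
      (\<Sum>T\<in>AS. (\<Sum>S\<in>AS. f S * of_int (dc S T)) * of_int (dc T U))"
    unfolding dmap_def ..
  also have "\<dots> = (\<Sum>T\<in>AS. \<Sum>S\<in>AS. f S * of_int (dc S T * dc T U))"
    by (simp add: sum_distrib_right mult.assoc)
  also have "\<dots> = (\<Sum>S\<in>AS. \<Sum>T\<in>AS. f S * of_int (dc S T * dc T U))"
    by (rule sum.swap)
  also have "\<dots> = (\<Sum>S\<in>AS. f S * of_int (\<Sum>T\<in>AS. dc S T * dc T U))"
    by (simp add: sum_distrib_left)
  also have "\<dots> = 0" using dd_coef by simp
  finally show "dmap V E ends es (dmap V E ends es f) U = 0 U" by simp
qed

lemma states_AS: "states V E ends i j \<subseteq> AS"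
  unfolding states_def all_states_def by auto

lemma fin_states: "finite (states V E ends i j)"
  using finite_subset[OF states_AS fin_AS] .

lemma dmap_chains:
  assumes f: "f \<in> chains V E ends i j"
  shows "dmap V E ends es f \<in> chains V E ends (Suc i) j"
  unfolding chains_def
proof (intro CollectI allI impI)
  fix T assume "dmap V E ends es f T \<noteq> 0"
  then have "(\<Sum>S\<in>AS. f S * of_int (dc S T)) \<noteq> 0" unfolding dmap_def by simp
  then obtain S where S: "S \<in> AS" "f S * of_int (dc S T) \<noteq> 0"
    by (rule sum.not_neutral_contains_not_neutral)
  have "f S \<noteq> 0" using S by auto
  then have Sst: "S \<in> states V E ends i j" using f unfolding chains_def by blast
  have "dc S T \<noteq> 0" using S by auto
  then have "(\<Sum>e\<in>E - fst S. if next_state V ends S e = Some T then (-1::int) ^ n_before es (fst S) e else 0) \<noteq> 0"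
    unfolding dcoef_def by simp
  then obtain e where e: "e \<in> E - fst S" "(if next_state V ends S e = Some T then (-1::int) ^ n_before es (fst S) e else 0) \<noteq> 0"
    by (rule sum.not_neutral_contains_not_neutral)
  then have "next_state V ends S e = Some T" by (auto split: if_splits)
  then show "T \<in> states V E ends (Suc i) j" using ns_states[OF Sst e(1)] by simp
qed

end

sublocale GO \<subseteq> Q: vector_space "qscale :: rat \<Rightarrow> (('v, 'e) state \<Rightarrow> rat) \<Rightarrow> _"
  by (rule vs_qscale)

context GO begin

lemma chains_span: "chains V E ends i j \<subseteq> Q.span (delta ` states V E ends i j)"
proof
  fix f assume f: "f \<in> chains V E ends i j"
  have "f = (\<Sum>S\<in>states V E ends i j. qscale (f S) (delta S))"
  proof (rule ext)
    fix T
    have "(\<Sum>S\<in>states V E ends i j. qscale (f S) (delta S)) T = (\<Sum>S\<in>states V E ends i j. f S * delta S T)"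
      unfolding qscale_def sum_fun_app ..
    also have "\<dots> = (\<Sum>S\<in>states V E ends i j. if T = S then f T else 0)"
      unfolding delta_def by (rule sum.cong) auto
    also have "\<dots> = f T"
    proof -
      have fT: "T \<notin> states V E ends i j \<Longrightarrow> f T = 0" using f unfolding chains_def by blast
      show ?thesis using fT fin_states[of i j] by (simp add: sum.delta)
    qed
    finally show "f T = (\<Sum>S\<in>states V E ends i j. qscale (f S) (delta S)) T" by simp
  qed
  also have "\<dots> \<in> Q.span (delta ` states V E ends i j)"
    by (intro Q.span_sum Q.span_scale Q.span_base) auto
  finally show "f \<in> Q.span (delta ` states V E ends i j)" .
qed

lemma delta_indep: "Q.independent (delta ` states V E ends i j)"
proof (rule Q.independent_if_scalars_zero)
  show "finite (delta ` states V E ends i j)" using fin_states by auto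
  fix g x assume sum0: "(\<Sum>x\<in>delta ` states V E ends i j. qscale (g x) x) = 0"
    and x: "x \<in> delta ` states V E ends i j"
  then obtain S where S: "S \<in> states V E ends i j" "x = delta S" by auto
  have "0 = (\<Sum>x\<in>delta ` states V E ends i j. qscale (g x) x) S" using sum0 by simp
  also have "\<dots> = (\<Sum>y\<in>delta ` states V E ends i j. g y * y S)"
    unfolding qscale_def sum_fun_app ..
  also have "\<dots> = (\<Sum>S'\<in>states V E ends i j. g (delta S') * delta S' S)"
    by (subst sum.reindex) (use delta_inj in \<open>auto simp: inj_on_def\<close>)
  also have "\<dots> = (\<Sum>S'\<in>states V E ends i j. if S' = S then g (delta S) else 0)"
    unfolding delta_def by (rule sum.cong) auto
  also have "\<dots> = g (delta S)" using S fin_states by (simp add: sum.delta')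
  finally show "g x = 0" using S by simp
qed

lemma delta_chains: "delta ` states V E ends i j \<subseteq> chains V E ends i j"
proof
  fix x assume "x \<in> delta ` states V E ends i j"
  then obtain S where S: "S \<in> states V E ends i j" "x = delta S" by auto
  have "\<forall>T. x T \<noteq> 0 \<longrightarrow> T \<in> states V E ends i j" using S unfolding delta_def by auto
  then show "x \<in> chains V E ends i j" unfolding chains_def by blast
qed

lemma dim_chains: "qdim (chains V E ends i j) = card (states V E ends i j)"
proof -
  have "card (delta ` states V E ends i j) = Q.dim (chains V E ends i j)"
    by (rule Q.basis_card_eq_dim[OF delta_chains chains_span delta_indep])
  then show ?thesis unfolding qdim_def using delta_inj card_image[of delta] by (metis inj_on_subset subset_UNIV)
qed

lemma chains_subspace: "Q.subspace (chains V E ends i j)"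
  unfolding Q.subspace_def
proof (intro conjI ballI allI)
  show "0 \<in> chains V E ends i j" unfolding chains_def by simp
  fix x y assume x: "x \<in> chains V E ends i j" and y: "y \<in> chains V E ends i j"
  show "x + y \<in> chains V E ends i j" unfolding chains_def
  proof (intro CollectI allI impI)
    fix S assume "(x + y) S \<noteq> 0"
    then have "x S \<noteq> 0 \<or> y S \<noteq> 0" by auto
    then show "S \<in> states V E ends i j" using x y unfolding chains_def by blast
  qed
next
  fix c x assume x: "x \<in> chains V E ends i j"
  show "qscale c x \<in> chains V E ends i j" using x unfolding chains_def qscale_def by auto
qed

end

lemma telescope:
  fixes b :: "nat \<Rightarrow> real"
  shows "(\<Sum>i\<in>{0..k}. (-1)^i * (b i + b (Suc i))) = b 0 + (-1)^k * b (Suc k)"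
  by (induction k) (auto simp: algebra_simps)

context GO begin

abbreviation "dm \<equiv> dmap V E ends es"

lemma bnd_sub_cyc: "boundaries V E ends es i j \<subseteq> cycles V E ends es i j"
proof (cases i)
  case 0
  have d0: "dm 0 = 0" unfolding dmap_def by (rule ext) simp
  have c0: "(0 :: ('v, 'e) state \<Rightarrow> rat) \<in> chains V E ends i j" unfolding chains_def by simp
  show ?thesis unfolding boundaries_def cycles_def using 0 d0 c0 by simp
next
  case (Suc k)
  show ?thesis
  proof
    fix x assume "x \<in> boundaries V E ends es i j"
    then obtain f where f: "f \<in> chains V E ends k j" "x = dm f" unfolding boundaries_def Suc by auto
    show "x \<in> cycles V E ends es i j" unfolding cycles_def Suc using f dmap_chains dd_zero by auto
  qed
qed

lemma cyc_sub: "cycles V E ends es i j \<subseteq> chains V E ends i j"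
  unfolding cycles_def by auto

lemma fin_delta: "finite (delta ` states V E ends i j)"
  using fin_states by auto

lemma rn: "qdim (chains V E ends i j) = qdim (cycles V E ends es i j) + qdim (boundaries V E ends es (Suc i) j)"
  unfolding qdim_def cycles_def boundaries_def
  using Q.my_rank_nullity[OF chains_subspace chains_span fin_delta dmap_linear] by simp

lemma b_le_z: "qdim (boundaries V E ends es i j) \<le> qdim (cycles V E ends es i j)"
  unfolding qdim_def
  by (rule Q.my_dim_mono[OF bnd_sub_cyc subset_trans[OF cyc_sub chains_span] fin_delta])

lemma dim_zero_set: "Q.dim {0} = 0"
proof -
  have "Q.dim {0} \<le> card ({} :: (('v, 'e) state \<Rightarrow> rat) set)"
    by (rule Q.dim_le_card) auto
  then show ?thesis by simp
qed

lemma b0: "qdim (boundaries V E ends es 0 j) = 0"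
  unfolding qdim_def boundaries_def using dim_zero_set by simp

lemma states_big: "card E < i \<Longrightarrow> states V E ends i j = {}"
proof -
  assume a: "card E < i"
  show ?thesis
  proof (rule equals0I)
    fix S assume S: "S \<in> states V E ends i j"
    then have "fst S \<subseteq> E" "card (fst S) = i" unfolding states_def by auto
    then have "i \<le> card E" using card_mono[OF finE] by auto
    then show False using a by simp
  qed
qed

lemma bn: "qdim (boundaries V E ends es (Suc (card E)) j) = 0"
proof -
  have "boundaries V E ends es (Suc (card E)) j \<subseteq> chains V E ends (Suc (card E)) j"
    using bnd_sub_cyc cyc_sub by blast
  also have "\<dots> \<subseteq> Q.span (delta ` states V E ends (Suc (card E)) j)" by (rule chains_span)
  also have "\<dots> = Q.span {}" using states_big[of "Suc (card E)" j] by simp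
  finally have "Q.dim (boundaries V E ends es (Suc (card E)) j) \<le> card ({} :: (('v, 'e) state \<Rightarrow> rat) set)"
    by (intro Q.dim_le_card) auto
  then show ?thesis unfolding qdim_def by simp
qed

lemma euler_j:
  "(\<Sum>i\<in>{0..card E}. (-1)^i * real (hrank V E ends es i j)) =
   (\<Sum>i\<in>{0..card E}. (-1)^i * real (card (states V E ends i j)))"
proof -
  define z where "z i = real (qdim (cycles V E ends es i j))" for i
  define b where "b i = real (qdim (boundaries V E ends es i j))" for i
  define c where "c i = real (card (states V E ends i j))" for i
  have h: "real (hrank V E ends es i j) = z i - b i" for i
    unfolding hrank_def z_def b_def using b_le_z[of i j] by (simp add: of_nat_diff)
  have cz: "c i = z i + b (Suc i)" for i
    unfolding c_def z_def b_def using rn[of i j] dim_chains[of i j] by simp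
  have "(\<Sum>i\<in>{0..card E}. (-1)^i * real (hrank V E ends es i j)) =
        (\<Sum>i\<in>{0..card E}. (-1)^i * c i - (-1)^i * (b i + b (Suc i)))"
    by (rule sum.cong[OF refl]) (simp add: h cz algebra_simps)
  also have "\<dots> = (\<Sum>i\<in>{0..card E}. (-1)^i * c i) - (\<Sum>i\<in>{0..card E}. (-1)^i * (b i + b (Suc i)))"
    by (simp add: sum_subtractf)
  also have "(\<Sum>i\<in>{0..card E}. (-1)^i * (b i + b (Suc i))) = 0"
    unfolding telescope using b0 bn unfolding b_def by simp
  finally show ?thesis unfolding c_def by simp
qed

end

lemma powsum:
  fixes q :: real
  assumes "finite A"
  shows "(\<Sum>X\<in>Pow A. q ^ card X) = (1 + q) ^ card A"
proof -
  have "(\<Prod>x\<in>A. q + 1) = (\<Sum>X\<in>Pow A. (\<Prod>x\<in>X. q) * (\<Prod>x\<in>A - X. 1))"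
    by (rule prod_add[OF assms])
  then show ?thesis by (simp add: add.commute)
qed

lemma mp_add: "map_poly (of_int :: int \<Rightarrow> real) (p + q) = map_poly of_int p + map_poly of_int q"
  by (rule poly_eqI) (simp add: coeff_map_poly)

lemma mp_sum: "map_poly (of_int :: int \<Rightarrow> real) (\<Sum>a\<in>A. f a) = (\<Sum>a\<in>A. map_poly of_int (f a))"
  by (induction A rule: infinite_finite_induct) (simp_all add: mp_add)

context G begin

lemma cmp_image: "cmp s = cof s ` V"
  unfolding comps_def comp_of_def quotient_def by auto

lemma card_cmp: "card (cmp s) \<le> card V"
  unfolding cmp_image using card_image_le[OF finV] .

lemma sum_states:
  fixes q :: real
  shows "(\<Sum>i\<in>{0..card E}. \<Sum>j\<in>{0..card V}. (-1)^i * q^j * real (card (states V E ends i j))) =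
         (\<Sum>s\<in>Pow E. (-1)^card s * (1 + q)^card (cmp s))"
proof -
  define w where "w S = (-1::real)^card (fst S) * q^card (snd S)" for S :: "('v, 'e) state"
  define g where "g S = (card (fst S), card (snd S))" for S :: "('v, 'e) state"
  have gi: "g ` AS \<subseteq> {0..card E} \<times> {0..card V}"
  proof
    fix p assume "p \<in> g ` AS"
    then obtain s X where sX: "s \<subseteq> E" "X \<subseteq> cmp s" "p = (card s, card X)"
      unfolding g_def all_states_def by auto
    have "card s \<le> card E" using card_mono[OF finE sX(1)] .
    moreover have "card X \<le> card V" using card_mono[OF fin_cmp sX(2)] card_cmp[of s] by linarith
    ultimately show "p \<in> {0..card E} \<times> {0..card V}" using sX by auto
  qed
  have st: "{S. S \<in> AS \<and> g S = (i, j)} = states V E ends i j" for i j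
    unfolding g_def all_states_def states_def by auto
  have "(\<Sum>S\<in>AS. w S) = (\<Sum>p\<in>{0..card E} \<times> {0..card V}. \<Sum>S\<in>{S. S \<in> AS \<and> g S = p}. w S)"
    by (rule sum.group[symmetric, OF fin_AS _ gi]) auto
  also have "\<dots> = (\<Sum>p\<in>{0..card E} \<times> {0..card V}. (-1)^fst p * q^snd p * real (card (states V E ends (fst p) (snd p))))"
  proof (rule sum.cong[OF refl])
    fix p :: "nat \<times> nat"
    obtain i j where p: "p = (i, j)" by fastforce
    have "(\<Sum>S\<in>states V E ends i j. w S) = (\<Sum>S\<in>states V E ends i j. (-1)^i * q^j)"
      by (rule sum.cong[OF refl]) (auto simp: w_def states_def)
    then show "(\<Sum>S\<in>{S. S \<in> AS \<and> g S = p}. w S) = (-1)^fst p * q^snd p * real (card (states V E ends (fst p) (snd p)))"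
      unfolding p st by simp
  qed
  also have "\<dots> = (\<Sum>i\<in>{0..card E}. \<Sum>j\<in>{0..card V}. (-1)^i * q^j * real (card (states V E ends i j)))"
    by (simp add: sum.cartesian_product split_beta)
  finally have L: "(\<Sum>S\<in>AS. w S) = (\<Sum>i\<in>{0..card E}. \<Sum>j\<in>{0..card V}. (-1)^i * q^j * real (card (states V E ends i j)))" .
  have ASs: "AS = Sigma (Pow E) (\<lambda>s. Pow (cmp s))" unfolding all_states_def by auto
  have "(\<Sum>S\<in>AS. w S) = (\<Sum>s\<in>Pow E. \<Sum>X\<in>Pow (cmp s). w (s, X))"
    unfolding ASs by (subst sum.Sigma) (auto simp: finE fin_cmp intro: finite_subset)
  also have "\<dots> = (\<Sum>s\<in>Pow E. (-1)^card s * (\<Sum>X\<in>Pow (cmp s). q ^ card X))"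
    unfolding w_def by (simp add: sum_distrib_left)
  also have "\<dots> = (\<Sum>s\<in>Pow E. (-1)^card s * (1 + q)^card (cmp s))"
    using powsum[OF fin_cmp] by simp
  finally show ?thesis using L by simp
qed

end

context G begin
lemma const_on_comp:
  assumes m: "\<forall>e\<in>s. c (fst (ends e)) = c (snd (ends e))" and P: "(adj ends s)\<^sup>*\<^sup>* x y"
  shows "c x = c y"
  using P
proof (induction rule: rtranclp.induct)
  case (rtrancl_refl a) then show ?case by simp
next
  case (rtrancl_into_rtrancl a b d)
  then obtain e where "e \<in> s" "ends e = (b, d) \<or> ends e = (d, b)" unfolding adj_def by auto
  then have "c b = c d" using m by (metis fst_conv snd_conv)
  then show ?case using rtrancl_into_rtrancl.IH by simp
qed

lemma card_mono_col:
  assumes sE: "s \<subseteq> E"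
  shows "card {c \<in> V \<rightarrow>\<^sub>E {..<n}. \<forall>e\<in>s. c (fst (ends e)) = c (snd (ends e))} = n ^ card (cmp s)"
proof -
  define F where "F h = (\<lambda>v\<in>V. h (cof s v))" for h :: "'v set \<Rightarrow> nat"
  have img: "{c \<in> V \<rightarrow>\<^sub>E {..<n}. \<forall>e\<in>s. c (fst (ends e)) = c (snd (ends e))} = F ` (cmp s \<rightarrow>\<^sub>E {..<n})"
  proof
    show "F ` (cmp s \<rightarrow>\<^sub>E {..<n}) \<subseteq> {c \<in> V \<rightarrow>\<^sub>E {..<n}. \<forall>e\<in>s. c (fst (ends e)) = c (snd (ends e))}"
    proof
      fix c assume "c \<in> F ` (cmp s \<rightarrow>\<^sub>E {..<n})"
      then obtain h where h: "h \<in> cmp s \<rightarrow>\<^sub>E {..<n}" "c = F h" by auto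
      have "c \<in> V \<rightarrow>\<^sub>E {..<n}" unfolding h(2) F_def using h(1) cof_in by auto
      moreover have "c (fst (ends e)) = c (snd (ends e))" if e: "e \<in> s" for e
      proof -
        have eE: "e \<in> E" using e sE by auto
        obtain u w where uw: "ends e = (u, w)" by fastforce
        have uV: "u \<in> V" "w \<in> V" using endsV[OF eE] uw by auto
        have "adj ends s u w" unfolding adj_def using e uw by auto
        then have "w \<in> cof s u" using P_cof[OF uV(1)] uV by auto
        then have "cof s u = cof s w" using cmp_cof[OF cof_in[OF uV(1)]] by simp
        then show ?thesis unfolding h(2) F_def using uw uV by simp
      qed
      ultimately show "c \<in> {c \<in> V \<rightarrow>\<^sub>E {..<n}. \<forall>e\<in>s. c (fst (ends e)) = c (snd (ends e))}" by auto
    qed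
  next
    show "{c \<in> V \<rightarrow>\<^sub>E {..<n}. \<forall>e\<in>s. c (fst (ends e)) = c (snd (ends e))} \<subseteq> F ` (cmp s \<rightarrow>\<^sub>E {..<n})"
    proof
      fix c assume c: "c \<in> {c \<in> V \<rightarrow>\<^sub>E {..<n}. \<forall>e\<in>s. c (fst (ends e)) = c (snd (ends e))}"
      define h where "h = (\<lambda>C\<in>cmp s. c (SOME v. v \<in> C))"
      have hP: "h \<in> cmp s \<rightarrow>\<^sub>E {..<n}"
      proof -
        have "c (SOME v. v \<in> C) < n" if C: "C \<in> cmp s" for C
        proof -
          have "(SOME v. v \<in> C) \<in> C" using cmp_ne[OF C] by (simp add: some_in_eq)
          then have "(SOME v. v \<in> C) \<in> V" using cmp_sub[OF C] by auto
          then show ?thesis using c by auto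
        qed
        then show ?thesis unfolding h_def by auto
      qed
      have "F h = c"
      proof (rule ext)
        fix v
        show "F h v = c v"
        proof (cases "v \<in> V")
          case True
          define x where "x = (SOME x. x \<in> cof s v)"
          have "x \<in> cof s v" unfolding x_def using in_cof[OF True] by (metis someI)
          then have "(adj ends s)\<^sup>*\<^sup>* v x" using P_cof[OF True] by auto
          then have "c v = c x" using const_on_comp c by blast
          then show ?thesis unfolding F_def h_def x_def using True cof_in[OF True] by simp
        next
          case False
          then show ?thesis unfolding F_def using c by (auto simp: PiE_def extensional_def)
        qed
      qed
      then show "c \<in> F ` (cmp s \<rightarrow>\<^sub>E {..<n})" using hP by blast
    qed
  qed
  have inj: "inj_on F (cmp s \<rightarrow>\<^sub>E {..<n})"
  proof (rule inj_onI)
    fix h1 h2 assume h: "h1 \<in> cmp s \<rightarrow>\<^sub>E {..<n}" "h2 \<in> cmp s \<rightarrow>\<^sub>E {..<n}" "F h1 = F h2"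
    show "h1 = h2"
    proof (rule PiE_ext[OF h(1,2)])
      fix C assume C: "C \<in> cmp s"
      obtain v where v: "v \<in> C" using cmp_ne[OF C] by auto
      have vV: "v \<in> V" using v cmp_sub[OF C] by auto
      have "F h1 v = F h2 v" using h(3) by simp
      then have "h1 (cof s v) = h2 (cof s v)" unfolding F_def using vV by simp
      then show "h1 C = h2 C" using cmp_cof[OF C v] by simp
    qed
  qed
  show ?thesis unfolding img card_image[OF inj] card_PiE[OF fin_cmp] by simp
qed

end

context G begin
lemma col_count:
  "int (card (proper_colorings V E ends n)) = (\<Sum>s\<in>Pow E. (-1)^card s * int n ^ card (cmp s))"
proof -
  define CS where "CS = V \<rightarrow>\<^sub>E {..<n}"
  have finCS: "finite CS" unfolding CS_def using finV by (simp add: finite_PiE)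
  define ind where "ind e c = (if c (fst (ends e)) = c (snd (ends e)) then 1 else (0::int))" for e and c :: "'v \<Rightarrow> nat"
  have "int (card (proper_colorings V E ends n)) = (\<Sum>c\<in>CS. if \<forall>e\<in>E. c (fst (ends e)) \<noteq> c (snd (ends e)) then 1 else 0)"
  proof -
    have e: "proper_colorings V E ends n = CS \<inter> {c. \<forall>e\<in>E. c (fst (ends e)) \<noteq> c (snd (ends e))}"
      unfolding proper_colorings_def CS_def by auto
    show ?thesis unfolding e by (simp add: sum.If_cases[OF finCS])
  qed
  also have "\<dots> = (\<Sum>c\<in>CS. \<Prod>e\<in>E. (- ind e c) + 1)"
  proof (rule sum.cong[OF refl])
    fix c
    show "(if \<forall>e\<in>E. c (fst (ends e)) \<noteq> c (snd (ends e)) then 1 else 0) = (\<Prod>e\<in>E. (- ind e c) + 1)"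
    proof (cases "\<forall>e\<in>E. c (fst (ends e)) \<noteq> c (snd (ends e))")
      case True
      then have "(\<Prod>e\<in>E. (- ind e c) + 1) = (\<Prod>e\<in>E. 1)" by (intro prod.cong) (auto simp: ind_def)
      then show ?thesis using True by simp
    next
      case False
      then obtain e where e: "e \<in> E" "c (fst (ends e)) = c (snd (ends e))" by auto
      then have z: "(- ind e c) + 1 = 0" unfolding ind_def by simp
      have "(\<Prod>e\<in>E. (- ind e c) + 1) = 0" unfolding prod_zero_iff[OF finE] using e(1) z by blast
      then show ?thesis using False by simp
    qed
  qed
  also have "\<dots> = (\<Sum>c\<in>CS. \<Sum>s\<in>Pow E. (-1)^card s * (if \<forall>e\<in>s. c (fst (ends e)) = c (snd (ends e)) then 1 else 0))"
  proof (rule sum.cong[OF refl])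
    fix c
    have "(\<Prod>e\<in>E. (- ind e c) + 1) = (\<Sum>s\<in>Pow E. (\<Prod>e\<in>s. - ind e c) * (\<Prod>e\<in>E - s. 1))"
      by (rule prod_add[OF finE])
    also have "\<dots> = (\<Sum>s\<in>Pow E. (-1)^card s * (if \<forall>e\<in>s. c (fst (ends e)) = c (snd (ends e)) then 1 else 0))"
    proof (rule sum.cong[OF refl])
      fix s assume "s \<in> Pow E"
      then have fs: "finite s" using finE finite_subset by auto
      have "(\<Prod>e\<in>s. - ind e c) = (-1)^card s * (\<Prod>e\<in>s. ind e c)"
        by (simp add: prod_uminus fs)
      moreover have "(\<Prod>e\<in>s. ind e c) = (if \<forall>e\<in>s. c (fst (ends e)) = c (snd (ends e)) then 1 else 0)"
      proof (cases "\<forall>e\<in>s. c (fst (ends e)) = c (snd (ends e))")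
        case True then show ?thesis by (simp add: ind_def)
      next
        case False
        then obtain e where e: "e \<in> s" "ind e c = 0" unfolding ind_def by auto
        have "(\<Prod>e\<in>s. ind e c) = 0" unfolding prod_zero_iff[OF fs] using e by blast
        then show ?thesis using False by simp
      qed
      ultimately show "(\<Prod>e\<in>s. - ind e c) * (\<Prod>e\<in>E - s. 1) = (-1)^card s * (if \<forall>e\<in>s. c (fst (ends e)) = c (snd (ends e)) then 1 else 0)"
        by simp
    qed
    finally show "(\<Prod>e\<in>E. (- ind e c) + 1) = (\<Sum>s\<in>Pow E. (-1)^card s * (if \<forall>e\<in>s. c (fst (ends e)) = c (snd (ends e)) then 1 else 0))" .
  qed
  also have "\<dots> = (\<Sum>s\<in>Pow E. (-1)^card s * (\<Sum>c\<in>CS. if \<forall>e\<in>s. c (fst (ends e)) = c (snd (ends e)) then 1 else 0))"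
    by (subst sum.swap) (simp add: sum_distrib_left)
  also have "\<dots> = (\<Sum>s\<in>Pow E. (-1)^card s * int n ^ card (cmp s))"
  proof (rule sum.cong[OF refl])
    fix s assume "s \<in> Pow E"
    then have sE: "s \<subseteq> E" by auto
    have "(\<Sum>c\<in>CS. if \<forall>e\<in>s. c (fst (ends e)) = c (snd (ends e)) then 1 else 0) =
          int (card {c \<in> CS. \<forall>e\<in>s. c (fst (ends e)) = c (snd (ends e))})"
    proof -
      have e: "{c \<in> CS. \<forall>e\<in>s. c (fst (ends e)) = c (snd (ends e))} = CS \<inter> {c. \<forall>e\<in>s. c (fst (ends e)) = c (snd (ends e))}"
        by auto
      show ?thesis unfolding e by (simp add: sum.If_cases[OF finCS])
    qed
    also have "\<dots> = int n ^ card (cmp s)" unfolding CS_def card_mono_col[OF sE] by simp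
    finally show "(-1)^card s * (\<Sum>c\<in>CS. if \<forall>e\<in>s. c (fst (ends e)) = c (snd (ends e)) then 1 else 0) =
        (-1)^card s * int n ^ card (cmp s)" by simp
  qed
  finally show ?thesis .
qed

end

context G begin
definition cpoly :: "int poly" where
  "cpoly = (\<Sum>s\<in>Pow E. monom ((-1)^card s) (card (cmp s)))"

lemma cpoly_eval: "poly cpoly (int n) = int (card (proper_colorings V E ends n))"
  unfolding col_count cpoly_def poly_sum poly_monom ..

lemma chrom_eq: "chromatic_poly V E ends = cpoly"
  unfolding chromatic_poly_def
proof (rule the_equality)
  show "\<forall>n. poly cpoly (int n) = int (card (proper_colorings V E ends n))" using cpoly_eval by simp
  fix p assume p: "\<forall>n. poly p (int n) = int (card (proper_colorings V E ends n))"
  show "p = cpoly"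
  proof (rule ccontr)
    assume "p \<noteq> cpoly"
    then have "p - cpoly \<noteq> 0" by simp
    then have fin: "finite {x. poly (p - cpoly) x = 0}" by (rule poly_roots_finite)
    have "range int \<subseteq> {x. poly (p - cpoly) x = 0}" using p cpoly_eval by auto
    moreover have "infinite (range int)" using inj_of_nat[where 'a=int] by (simp add: finite_image_iff)
    ultimately show False using fin finite_subset by blast
  qed
qed

lemma chrom_real: "poly (map_poly real_of_int (chromatic_poly V E ends)) x = (\<Sum>s\<in>Pow E. (-1)^card s * x ^ card (cmp s))"
  unfolding chrom_eq cpoly_def mp_sum poly_sum
  by (rule sum.cong[OF refl]) (simp add: map_poly_monom poly_monom)

end

locale GO2 = G V E ends for V :: "'v set" and E :: "'e set" and ends :: "'e \<Rightarrow> 'v \<times> 'v" +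
  fixes es1 es2 :: "'e list"
  assumes eo1: "edge_ordering E es1" and eo2: "edge_ordering E es2"
begin

lemma d1: "distinct es1" "set es1 = E" and d2: "distinct es2" "set es2 = E"
  using eo1 eo2 unfolding edge_ordering_def by auto

abbreviation lt1 where "lt1 a b \<equiv> a \<in> set (takeWhile (\<lambda>z. z \<noteq> b) es1)"
abbreviation lt2 where "lt2 a b \<equiv> a \<in> set (takeWhile (\<lambda>z. z \<noteq> b) es2)"

definition inv :: "'e set \<Rightarrow> ('e \<times> 'e) set" where
  "inv s = {(a, b). a \<in> s \<and> b \<in> s \<and> lt1 a b \<and> lt2 b a}"

definition eps :: "'e set \<Rightarrow> int" where
  "eps s = (-1) ^ card (inv s)"

lemma eps_sq: "eps s * eps s = 1"
  unfolding eps_def by (simp add: power_mult_distrib[symmetric])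

lemma eps_insert:
  assumes sE: "s \<subseteq> E" and e: "e \<in> E" "e \<notin> s"
  shows "eps (insert e s) = eps s * (-1) ^ (n_before es1 s e + n_before es2 s e)"
proof -
  have fs: "finite s" using sE finE finite_subset by auto
  define P1 where "P1 = {a \<in> s. lt1 a e}"
  define P2 where "P2 = {a \<in> s. lt2 a e}"
  have n1: "n_before es1 s e = card P1" unfolding n_before_def P1_def ..
  have n2: "n_before es2 s e = card P2" unfolding n_before_def P2_def ..
  have sw1: "lt1 e a \<longleftrightarrow> \<not> lt1 a e" if "a \<in> s" for a
    using tw_swap[OF d1(1), of a e] that e sE d1(2) by auto
  have sw2: "lt2 e a \<longleftrightarrow> \<not> lt2 a e" if "a \<in> s" for a
    using tw_swap[OF d2(1), of a e] that e sE d2(2) by auto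
  have ee1: "\<not> lt1 e e" by (induction es1) auto
  define L where "L = (\<lambda>a. (a, e)) ` (P1 - P2)"
  define R where "R = (\<lambda>b. (e, b)) ` (P2 - P1)"
  have invI: "inv (insert e s) = inv s \<union> L \<union> R"
  proof
    show "inv (insert e s) \<subseteq> inv s \<union> L \<union> R"
    proof
      fix p assume p: "p \<in> inv (insert e s)"
      obtain a b where ab: "p = (a, b)" by fastforce
      show "p \<in> inv s \<union> L \<union> R"
      proof (cases "a = e")
        case True
        then have "b \<in> s" "lt1 e b" "lt2 b e" using p ab ee1 unfolding inv_def by auto
        then have "b \<in> P2 - P1" unfolding P1_def P2_def using sw1 by auto
        then show ?thesis unfolding R_def using ab True by auto
      next
        case False
        show ?thesis
        proof (cases "b = e")
          case True
          then have "a \<in> s" "lt1 a e" "lt2 e a" using p ab False unfolding inv_def by auto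
          then have "a \<in> P1 - P2" unfolding P1_def P2_def using sw2 by auto
          then show ?thesis unfolding L_def using ab True by auto
        next
          case False2: False
          then show ?thesis using p ab False unfolding inv_def by auto
        qed
      qed
    qed
    show "inv s \<union> L \<union> R \<subseteq> inv (insert e s)"
      unfolding inv_def L_def R_def P1_def P2_def using sw1 sw2 by auto
  qed
  have "inv s \<subseteq> s \<times> s" unfolding inv_def by auto
  then have finI: "finite (inv s)" using finite_cartesian_product[OF fs fs] by (rule finite_subset)
  have finL: "finite L" "finite R" unfolding L_def R_def P1_def P2_def using fs by auto
  have disj: "inv s \<inter> L = {}" "(inv s \<union> L) \<inter> R = {}" "L \<inter> R = {}"
    unfolding inv_def L_def R_def P1_def P2_def using e by auto
  have cI: "card (inv (insert e s)) = card (inv s) + card L + card R"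
    unfolding invI using finI finL disj by (simp add: card_Un_disjoint)
  have cL: "card L = card (P1 - P2)" unfolding L_def by (rule card_image) (auto simp: inj_on_def)
  have cR: "card R = card (P2 - P1)" unfolding R_def by (rule card_image) (auto simp: inj_on_def)
  have finP: "finite P1" "finite P2" unfolding P1_def P2_def using fs by auto
  have c12: "card P1 + card P2 = card (P1 - P2) + card (P2 - P1) + 2 * card (P1 \<inter> P2)"
  proof -
    have "card P1 = card (P1 \<inter> P2) + card (P1 - P2)" using card_Int_Diff[OF finP(1)] .
    moreover have "card P2 = card (P2 \<inter> P1) + card (P2 - P1)" using card_Int_Diff[OF finP(2)] .
    moreover have "P2 \<inter> P1 = P1 \<inter> P2" by auto
    ultimately show ?thesis by simp
  qed
  have "eps (insert e s) = eps s * (-1) ^ (card L + card R)"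
    unfolding eps_def cI by (simp add: power_add)
  also have "(-1::int) ^ (card L + card R) = (-1) ^ (n_before es1 s e + n_before es2 s e)"
    unfolding n1 n2 c12 cL cR by (simp add: power_add power_mult)
  finally show ?thesis .
qed

lemma ns_fst: "next_state V ends S e = Some T \<Longrightarrow> fst T = insert e (fst S)"
  unfolding next_state_def Let_def by (auto split: if_splits)

lemma dc_rel:
  assumes S: "S \<in> AS"
  shows "dcoef V E ends es2 S T = eps (fst S) * eps (fst T) * dcoef V E ends es1 S T"
proof -
  have sE: "fst S \<subseteq> E" using S unfolding all_states_def by auto
  have "dcoef V E ends es2 S T = (\<Sum>e\<in>E - fst S. eps (fst S) * eps (fst T) *
      (if next_state V ends S e = Some T then (-1) ^ n_before es1 (fst S) e else 0))"
    unfolding dcoef_def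
  proof (rule sum.cong[OF refl])
    fix e assume e: "e \<in> E - fst S"
    show "(if next_state V ends S e = Some T then (-1) ^ n_before es2 (fst S) e else 0) =
      eps (fst S) * eps (fst T) * (if next_state V ends S e = Some T then (-1) ^ n_before es1 (fst S) e else 0)"
    proof (cases "next_state V ends S e = Some T")
      case True
      then have fT: "fst T = insert e (fst S)" by (rule ns_fst)
      have ei: "eps (fst T) = eps (fst S) * (-1) ^ (n_before es1 (fst S) e + n_before es2 (fst S) e)"
        unfolding fT using eps_insert[OF sE] e by auto
      have "eps (fst S) * eps (fst T) * (-1) ^ n_before es1 (fst S) e =
          (eps (fst S) * eps (fst S)) * ((-1) ^ n_before es1 (fst S) e * (-1) ^ n_before es1 (fst S) e) * (-1) ^ n_before es2 (fst S) e"
        unfolding ei by (simp add: power_add algebra_simps)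
      also have "\<dots> = (-1) ^ n_before es2 (fst S) e"
        by (simp add: eps_sq power_mult_distrib[symmetric])
      finally show ?thesis using True by simp
    qed simp
  qed
  also have "\<dots> = eps (fst S) * eps (fst T) * dcoef V E ends es1 S T"
    unfolding dcoef_def by (simp add: sum_distrib_left)
  finally show ?thesis .
qed

definition Phi :: "(('v, 'e) state \<Rightarrow> rat) \<Rightarrow> (('v, 'e) state \<Rightarrow> rat)" where
  "Phi f = (\<lambda>S. of_int (eps (fst S)) * f S)"

lemma eps_one: "(of_int (eps s) :: rat) * of_int (eps s) = 1"
  by (simp only: of_int_mult[symmetric] eps_sq of_int_1)

lemma Phi_Phi: "Phi (Phi f) = f"
proof (rule ext)
  fix S :: "('v, 'e) state"
  have "of_int (eps (fst S)) * (of_int (eps (fst S)) * f S) = (of_int (eps (fst S)) * of_int (eps (fst S))) * f S"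
    by (rule mult.assoc[symmetric])
  then show "Phi (Phi f) S = f S" unfolding Phi_def using eps_one by simp
qed

lemma Phi_inj: "inj Phi"
proof (rule injI)
  fix x y assume "Phi x = Phi y"
  then have "Phi (Phi x) = Phi (Phi y)" by simp
  then show "x = y" by (simp add: Phi_Phi)
qed

lemma Phi_linear: "Vector_Spaces.linear qscale qscale Phi"
  unfolding Vector_Spaces.linear_iff
proof (intro conjI allI)
  show "vector_space (qscale :: rat \<Rightarrow> (('v, 'e) state \<Rightarrow> rat) \<Rightarrow> _)" by (rule vs_qscale)
  show "vector_space (qscale :: rat \<Rightarrow> (('v, 'e) state \<Rightarrow> rat) \<Rightarrow> _)" by (rule vs_qscale)
  fix x y :: "('v, 'e) state \<Rightarrow> rat"
  show "Phi (x + y) = Phi x + Phi y" unfolding Phi_def by (rule ext) (simp add: algebra_simps)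
  fix c
  show "Phi (qscale c x) = qscale c (Phi x)" unfolding Phi_def qscale_def by (rule ext) (simp add: algebra_simps)
qed

lemma Phi_chains: "f \<in> chains V E ends i j \<Longrightarrow> Phi f \<in> chains V E ends i j"
proof -
  assume f: "f \<in> chains V E ends i j"
  show ?thesis unfolding chains_def
  proof (intro CollectI allI impI)
    fix S assume "Phi f S \<noteq> 0"
    then have "f S \<noteq> 0" unfolding Phi_def by auto
    then show "S \<in> states V E ends i j" using f unfolding chains_def by blast
  qed
qed

lemma Phi_chains_eq: "Phi ` chains V E ends i j = chains V E ends i j"
proof
  show "Phi ` chains V E ends i j \<subseteq> chains V E ends i j" using Phi_chains by auto
  show "chains V E ends i j \<subseteq> Phi ` chains V E ends i j"
  proof
    fix f assume "f \<in> chains V E ends i j"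
    then have "Phi f \<in> chains V E ends i j" by (rule Phi_chains)
    moreover have "f = Phi (Phi f)" by (simp add: Phi_Phi)
    ultimately show "f \<in> Phi ` chains V E ends i j" by blast
  qed
qed

lemma Phi_zero: "Phi 0 = 0"
  unfolding Phi_def by auto

lemma dmap_Phi: "dmap V E ends es2 (Phi f) = Phi (dmap V E ends es1 f)"
proof (rule ext)
  fix T
  have "dmap V E ends es2 (Phi f) T = (\<Sum>S\<in>AS. of_int (eps (fst S)) * f S * of_int (eps (fst S) * eps (fst T) * dcoef V E ends es1 S T))"
    unfolding dmap_def Phi_def by (rule sum.cong[OF refl]) (simp add: dc_rel)
  also have "\<dots> = (\<Sum>S\<in>AS. of_int (eps (fst T)) * (f S * of_int (dcoef V E ends es1 S T)))"
  proof (rule sum.cong[OF refl])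
    fix S :: "('v, 'e) state"
    have one: "of_int (eps (fst S)) * of_int (eps (fst S)) = (1::rat)"
      using eps_sq[of "fst S"] by (metis of_int_1 of_int_mult)
    then show "of_int (eps (fst S)) * f S * of_int (eps (fst S) * eps (fst T) * dcoef V E ends es1 S T) =
      of_int (eps (fst T)) * (f S * of_int (dcoef V E ends es1 S T))"
    proof -
      have "of_int (eps (fst S)) * f S * of_int (eps (fst S) * eps (fst T) * dcoef V E ends es1 S T) =
        (of_int (eps (fst S)) * of_int (eps (fst S))) * (of_int (eps (fst T)) * (f S * of_int (dcoef V E ends es1 S T)))"
        by (simp add: algebra_simps)
      then show ?thesis using one by simp
    qed
  qed
  also have "\<dots> = Phi (dmap V E ends es1 f) T"
    unfolding dmap_def Phi_def by (simp add: sum_distrib_left)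
  finally show "dmap V E ends es2 (Phi f) T = Phi (dmap V E ends es1 f) T" .
qed

lemma cycles_Phi: "cycles V E ends es2 i j = Phi ` cycles V E ends es1 i j"
proof
  show "cycles V E ends es2 i j \<subseteq> Phi ` cycles V E ends es1 i j"
  proof
    fix x assume x: "x \<in> cycles V E ends es2 i j"
    have "Phi x \<in> cycles V E ends es1 i j"
    proof -
      have "Phi (dmap V E ends es1 (Phi x)) = 0" using x dmap_Phi[of "Phi x"] Phi_Phi unfolding cycles_def by simp
      then have "Phi (dmap V E ends es1 (Phi x)) = Phi 0" using Phi_zero by simp
      then have "dmap V E ends es1 (Phi x) = 0" by (rule injD[OF Phi_inj])
      then show ?thesis using x Phi_chains unfolding cycles_def by auto
    qed
    moreover have "x = Phi (Phi x)" by (simp add: Phi_Phi)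
    ultimately show "x \<in> Phi ` cycles V E ends es1 i j" by blast
  qed
  show "Phi ` cycles V E ends es1 i j \<subseteq> cycles V E ends es2 i j"
  proof
    fix x assume "x \<in> Phi ` cycles V E ends es1 i j"
    then obtain y where y: "y \<in> cycles V E ends es1 i j" "x = Phi y" by auto
    have "dmap V E ends es2 x = 0" using y dmap_Phi Phi_zero unfolding cycles_def by simp
    then show "x \<in> cycles V E ends es2 i j" using y Phi_chains unfolding cycles_def by auto
  qed
qed

lemma bnd_Phi: "boundaries V E ends es2 i j = Phi ` boundaries V E ends es1 i j"
proof (cases "i = 0")
  case True then show ?thesis unfolding boundaries_def using Phi_zero by simp
next
  case False
  have "dmap V E ends es2 ` chains V E ends (i - 1) j = dmap V E ends es2 ` Phi ` chains V E ends (i - 1) j"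
    using Phi_chains_eq by simp
  also have "\<dots> = Phi ` dmap V E ends es1 ` chains V E ends (i - 1) j"
    by (simp add: image_image dmap_Phi)
  finally show ?thesis unfolding boundaries_def using False by simp
qed

lemma hrank_eq: "hrank V E ends es2 i j = hrank V E ends es1 i j"
  unfolding hrank_def qdim_def cycles_Phi bnd_Phi
  using vector_space.my_dim_inj_image[OF vs_qscale Phi_linear Phi_inj] by simp

lemma RG_eq: "R_G V E ends es1 t q = R_G V E ends es2 t q"
  unfolding R_G_def hrank_eq ..

end

theorem mainTheorem4:
  fixes V :: "'v set" and E :: "'e set" and ends :: "'e \<Rightarrow> 'v \<times> 'v"
  assumes "fin_graph V E ends"
  shows "(\<forall>es1 es2. edge_ordering E es1 \<and> edge_ordering E es2 \<longrightarrow>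
            (\<forall>t q. R_G V E ends es1 t q = R_G V E ends es2 t q)) \<and>
         (\<forall>es. edge_ordering E es \<longrightarrow>
            (\<forall>q. R_G V E ends es (-1) q =
                 poly (map_poly real_of_int (chromatic_poly V E ends)) (1 + q)))"
proof -
  interpret G V E ends by unfold_locales (rule assms)
  show ?thesis
  proof (intro conjI allI impI)
    fix es1 es2 t q assume "edge_ordering E es1 \<and> edge_ordering E es2"
    then interpret GO2 V E ends es1 es2 by unfold_locales auto
    show "R_G V E ends es1 t q = R_G V E ends es2 t q" by (rule RG_eq)
  next
    fix es q assume eo: "edge_ordering E es"
    interpret GO V E ends es by unfold_locales (rule eo)
    have "R_G V E ends es (-1) q =
        (\<Sum>i\<in>{0..card E}. \<Sum>j\<in>{0..card V}. (-1)^i * q^j * real (hrank V E ends es i j))"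
      unfolding R_G_def ..
    also have "\<dots> = (\<Sum>j\<in>{0..card V}. \<Sum>i\<in>{0..card E}. q^j * ((-1)^i * real (hrank V E ends es i j)))"
      by (subst sum.swap) (simp add: mult_ac)
    also have "\<dots> = (\<Sum>j\<in>{0..card V}. q^j * (\<Sum>i\<in>{0..card E}. (-1)^i * real (hrank V E ends es i j)))"
      by (simp add: sum_distrib_left)
    also have "\<dots> = (\<Sum>j\<in>{0..card V}. q^j * (\<Sum>i\<in>{0..card E}. (-1)^i * real (card (states V E ends i j))))"
      by (simp add: euler_j)
    also have "\<dots> = (\<Sum>j\<in>{0..card V}. \<Sum>i\<in>{0..card E}. q^j * ((-1)^i * real (card (states V E ends i j))))"
      by (simp add: sum_distrib_left)
    also have "\<dots> = (\<Sum>i\<in>{0..card E}. \<Sum>j\<in>{0..card V}. (-1)^i * q^j * real (card (states V E ends i j)))"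
      by (subst sum.swap) (simp add: mult_ac)
    also have "\<dots> = (\<Sum>s\<in>Pow E. (-1)^card s * (1 + q)^card (cmp s))"
      by (rule sum_states)
    also have "\<dots> = poly (map_poly real_of_int (chromatic_poly V E ends)) (1 + q)"
      by (rule chrom_real[symmetric])
    finally show "R_G V E ends es (-1) q = poly (map_poly real_of_int (chromatic_poly V E ends)) (1 + q)" .
  qed
qed

end
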